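(* Let $X$ be a random variable taking values in a set $\mathcal{X}$ and $Y \in [0,1]$ a target outcome. Let $\mathcal{F}$ be a class of functions $\mathcal{X} \to \mathbb{R}$ that is closed under affine transformations, i.e. $f \in \mathcal{F}$ implies $a + bf \in \mathcal{F}$ for all $a, b \in \mathbb{R}$, and let $\tilde{\mathcal{F}} = \{f \in \mathcal{F} : \mathcal{R}(f) \subseteq [0,1]\}$. Let $h : \mathcal{X} \to [0,1]$ have countable range $\mathcal{R}(h)$ (with $\mathbb{P}(h(X) = v) > 0$ for each $v \in \mathcal{R}(h)$). If for all $f \in \mathcal{F}$ and $v \in \mathcal{R}(h)$, $$\mathbb{E}\left[(h(X) - Y)^2 - (f(X) - Y)^2 \mid h(X) = v\right] < \alpha^2,$$ then the level sets $\{x \in \mathcal{X} : h(x) = v\}$, $v \in \mathcal{R}(h)$, form a $(2\alpha)$-multicalibrated partition with respect to $\tilde{\mathcal{F}}$ and $Y$.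
   Context: $\mathcal{R}(f)$ denotes the range of a function $f$. A set $S \subseteq \mathcal{X}$ is $\alpha'$-indistinguishable with respect to a function class $\mathcal{G}$ and $Y$ if $|\mathrm{Cov}(g(X), Y \mid X \in S)| \le \alpha'$ for all $g \in \mathcal{G}$. Sets form an $\alpha'$-multicalibrated partition with respect to $\mathcal{G}$ and $Y$ if they partition $\mathcal{X}$ and each is $\alpha'$-indistinguishable with respect to $\mathcal{G}$ and $Y$. *)

theory Defs
  imports "HOL-Probability.Probability" "HOL-Library.Disjoint_Sets"
begin

definition cond_expect :: "'a measure \<Rightarrow> ('a \<Rightarrow> real) \<Rightarrow> 'a set \<Rightarrow> real" where
  "cond_expect M Z A = (\<integral>\<omega>. indicator A \<omega> * Z \<omega> \<partial>M) / measure M A"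

definition cond_cov :: "'a measure \<Rightarrow> ('a \<Rightarrow> 'b) \<Rightarrow> ('a \<Rightarrow> real) \<Rightarrow> ('b \<Rightarrow> real) \<Rightarrow> 'b set \<Rightarrow> real" where
  "cond_cov M X Y g S =
     (let A = X -` S \<inter> space M in
      cond_expect M (\<lambda>\<omega>. g (X \<omega>) * Y \<omega>) A
      - cond_expect M (\<lambda>\<omega>. g (X \<omega>)) A * cond_expect M Y A)"

definition indistinguishable ::
  "'a measure \<Rightarrow> ('a \<Rightarrow> 'b) \<Rightarrow> ('a \<Rightarrow> real) \<Rightarrow> ('b \<Rightarrow> real) set \<Rightarrow> real \<Rightarrow> 'b set \<Rightarrow> bool" where
  "indistinguishable M X Y G \<alpha>' S \<longleftrightarrow> (\<forall>g\<in>G. \<bar>cond_cov M X Y g S\<bar> \<le> \<alpha>')"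

definition multicalibrated_partition ::
  "'a measure \<Rightarrow> ('a \<Rightarrow> 'b) \<Rightarrow> ('a \<Rightarrow> real) \<Rightarrow> 'b set \<Rightarrow> ('b \<Rightarrow> real) set \<Rightarrow> real \<Rightarrow> 'b set set \<Rightarrow> bool" where
  "multicalibrated_partition M X Y D G \<alpha>' P \<longleftrightarrow>
     partition_on D P \<and> (\<forall>S\<in>P. indistinguishable M X Y G \<alpha>' S)"

end

theory Submission
  imports Defs
begin

lemma bint:
  fixes f :: "'a \<Rightarrow> real"
  assumes "prob_space M" "f \<in> borel_measurable M" "\<forall>\<omega>\<in>space M. \<bar>f \<omega>\<bar> \<le> B"
  shows "integrable M f"
proof -
  interpret prob_space M by fact
  show ?thesis using assms(2,3) by (intro integrable_const_bound[where B=B]) auto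
qed

lemma ind_int:
  fixes f :: "'a \<Rightarrow> real"
  shows "A \<in> sets M \<Longrightarrow> integrable M f \<Longrightarrow> integrable M (\<lambda>x. indicator A x * f x)"
  using integrable_real_mult_indicator[of A M f] by (simp add: mult.commute)

lemma core:
  fixes G Y :: "'a \<Rightarrow> real"
  assumes pm: "prob_space M" and A: "A \<in> sets M" and P: "measure M A > 0"
    and Gm: "G \<in> borel_measurable M" and Ym: "Y \<in> borel_measurable M"
    and G01: "\<forall>\<omega>\<in>space M. G \<omega> \<in> {0..1}" and Y01: "\<forall>\<omega>\<in>space M. Y \<omega> \<in> {0..1}"
    and al: "0 \<le> \<alpha>"
    and H: "\<And>\<eta>. cond_expect M (\<lambda>\<omega>. (v - Y \<omega>)\<^sup>2 - ((v - \<eta> * cond_expect M G A + \<eta> * G \<omega>) - Y \<omega>)\<^sup>2) A < \<alpha>\<^sup>2"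
  shows "\<bar>cond_expect M (\<lambda>\<omega>. G \<omega> * Y \<omega>) A - cond_expect M G A * cond_expect M Y A\<bar> \<le> 2 * \<alpha>"
proof -
  interpret prob_space M by fact
  define p where "p = measure M A"
  define I where "I Z = (\<integral>\<omega>. indicator A \<omega> * Z \<omega> \<partial>M)" for Z :: "'a \<Rightarrow> real"
  define \<mu> where "\<mu> = cond_expect M G A"
  have ce: "cond_expect M Z A = I Z / p" for Z unfolding cond_expect_def I_def p_def by simp
  have ip: "(\<integral>\<omega>. indicator A \<omega> \<partial>M) = p" using A p_def by (simp add: Int_absorb2 sets.sets_into_space)
  have iA: "integrable M (indicator A :: 'a \<Rightarrow> real)" using A by (intro bint[OF pm, of _ 1]) (auto simp: indicator_def)
  have iAG: "integrable M (\<lambda>\<omega>. indicator A \<omega> * G \<omega>)"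
    by (rule ind_int[OF A bint[OF pm Gm, of 1]]) (use G01 in auto)
  have iAY: "integrable M (\<lambda>\<omega>. indicator A \<omega> * Y \<omega>)"
    by (rule ind_int[OF A bint[OF pm Ym, of 1]]) (use Y01 in auto)
  have iAGY: "integrable M (\<lambda>\<omega>. indicator A \<omega> * (G \<omega> * Y \<omega>))"
    by (rule ind_int[OF A bint[OF pm, of _ 1]]) (use G01 Y01 Gm Ym in \<open>auto simp: abs_mult intro: mult_le_one\<close>)
  have pp: "p > 0" using P p_def by simp
  have IG0: "0 \<le> I G" unfolding I_def using G01 by (intro integral_nonneg_AE) (auto simp: indicator_def)
  have IG1: "I G \<le> p" unfolding I_def ip[symmetric]
    using G01 iAG iA by (intro integral_mono) (auto simp: indicator_def)
  have mu01: "0 \<le> \<mu>" "\<mu> \<le> 1" using IG0 IG1 pp by (auto simp: \<mu>_def ce)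
  define C where "C = cond_expect M (\<lambda>\<omega>. G \<omega> * Y \<omega>) A - cond_expect M G A * cond_expect M Y A"
  have key: "2 * \<eta> * C - \<eta>\<^sup>2 < \<alpha>\<^sup>2" for \<eta>
  proof -
    define D where "D \<omega> = (v - Y \<omega>)\<^sup>2 - ((v - \<eta> * \<mu> + \<eta> * G \<omega>) - Y \<omega>)\<^sup>2" for \<omega>
    define R where "R \<omega> = 2 * \<eta> * (indicator A \<omega> * (G \<omega> * Y \<omega>) - \<mu> * (indicator A \<omega> * Y \<omega>))
        - 2 * \<eta> * v * (indicator A \<omega> * G \<omega> - \<mu> * indicator A \<omega>) - \<eta>\<^sup>2 * indicator A \<omega>" for \<omega>
    have Dm: "D \<in> borel_measurable M" unfolding D_def using Gm Ym by measurable
    have iD: "integrable M (\<lambda>\<omega>. indicator A \<omega> * D \<omega>)"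
    proof (rule ind_int[OF A bint[OF pm Dm, of "(\<bar>v\<bar> + 1)\<^sup>2 + (\<bar>v\<bar> + \<bar>\<eta>\<bar> * 2 + 1)\<^sup>2"]], intro ballI)
      fix \<omega> assume w: "\<omega> \<in> space M"
      have a: "\<bar>v - Y \<omega>\<bar> \<le> \<bar>v\<bar> + 1" using Y01 w by auto
      have b: "\<bar>\<eta> * \<mu>\<bar> \<le> \<bar>\<eta>\<bar>" "\<bar>\<eta> * G \<omega>\<bar> \<le> \<bar>\<eta>\<bar>" using mu01 G01 w
        by (auto simp: abs_mult intro: mult_left_le)
      have c: "\<bar>(v - \<eta> * \<mu> + \<eta> * G \<omega>) - Y \<omega>\<bar> \<le> \<bar>v\<bar> + \<bar>\<eta>\<bar> * 2 + 1" using b Y01 w by auto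
      have "(v - Y \<omega>)\<^sup>2 \<le> (\<bar>v\<bar> + 1)\<^sup>2" using a by (metis abs_ge_zero power2_abs power_mono)
      moreover have "((v - \<eta> * \<mu> + \<eta> * G \<omega>) - Y \<omega>)\<^sup>2 \<le> (\<bar>v\<bar> + \<bar>\<eta>\<bar> * 2 + 1)\<^sup>2"
        using c by (metis abs_ge_zero power2_abs power_mono)
      ultimately show "\<bar>D \<omega>\<bar> \<le> (\<bar>v\<bar> + 1)\<^sup>2 + (\<bar>v\<bar> + \<bar>\<eta>\<bar> * 2 + 1)\<^sup>2" unfolding D_def
        by (smt (verit) zero_le_power2)
    qed
    have iR: "integrable M R" unfolding R_def using iAGY iAY iAG iA by simp
    have "R \<omega> \<le> indicator A \<omega> * D \<omega>" if w: "\<omega> \<in> space M" for \<omega>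
    proof (cases "\<omega> \<in> A")
      case True
      have g: "(G \<omega> - \<mu>)\<^sup>2 \<le> 1" using G01 w mu01
        unfolding abs_square_le_1 by auto
      have "D \<omega> = 2 * \<eta> * (G \<omega> * Y \<omega> - \<mu> * Y \<omega>) - 2 * \<eta> * v * (G \<omega> - \<mu>) - \<eta>\<^sup>2 * (G \<omega> - \<mu>)\<^sup>2"
        unfolding D_def by (simp add: power2_eq_square algebra_simps)
      moreover have "\<eta>\<^sup>2 * (G \<omega> - \<mu>)\<^sup>2 \<le> \<eta>\<^sup>2" using g by (simp add: mult_left_le)
      ultimately show ?thesis using True unfolding R_def by simp
    next
      case False then show ?thesis unfolding R_def by simp
    qed
    then have "integral\<^sup>L M R \<le> I D" unfolding I_def using iR iD by (intro integral_mono) auto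
    moreover have "integral\<^sup>L M R = 2 * \<eta> * (I (\<lambda>\<omega>. G \<omega> * Y \<omega>) - \<mu> * I Y) - 2 * \<eta> * v * (I G - \<mu> * p) - \<eta>\<^sup>2 * p"
      unfolding R_def I_def using iAGY iAY iAG iA ip by simp
    moreover have "I G - \<mu> * p = 0" using pp by (simp add: \<mu>_def ce)
    moreover have "I (\<lambda>\<omega>. G \<omega> * Y \<omega>) - \<mu> * I Y = p * C" using pp
      by (simp add: C_def \<mu>_def ce field_simps)
    moreover have "I D / p < \<alpha>\<^sup>2" using H[of \<eta>] unfolding ce D_def \<mu>_def .
    ultimately have "p * (2 * \<eta> * C - \<eta>\<^sup>2) < p * \<alpha>\<^sup>2" using pp
      by (simp add: field_simps)
    then show ?thesis using pp by simp
  qed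
  from key[of C] have "C\<^sup>2 < \<alpha>\<^sup>2" by (simp add: power2_eq_square)
  then have "\<bar>C\<bar> < \<alpha>" using al by (simp add: power2_less_imp_less abs_le_square_iff)
  then show ?thesis using al unfolding C_def by simp
qed


theorem lemma5:
  fixes M :: "'a measure" and N :: "'b measure"
    and X :: "'a \<Rightarrow> 'b" and Y :: "'a \<Rightarrow> real"
    and F :: "('b \<Rightarrow> real) set" and h :: "'b \<Rightarrow> real" and \<alpha> :: real
  assumes "prob_space M"
    and "X \<in> measurable M N"
    and "Y \<in> borel_measurable M"
    and "\<forall>\<omega>\<in>space M. Y \<omega> \<in> {0..1}"
    and "\<forall>f\<in>F. f \<in> borel_measurable N"
    and "\<forall>f\<in>F. \<forall>a b. (\<lambda>x. a + b * f x) \<in> F"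
    and "h \<in> borel_measurable N"
    and "\<forall>x\<in>space N. h x \<in> {0..1}"
    and "countable (h ` space N)"
    and "\<forall>v\<in>h ` space N. measure M {\<omega>\<in>space M. h (X \<omega>) = v} > 0"
    and "0 \<le> \<alpha>"
    and "\<forall>f\<in>F. \<forall>v\<in>h ` space N.
           cond_expect M (\<lambda>\<omega>. (h (X \<omega>) - Y \<omega>)\<^sup>2 - (f (X \<omega>) - Y \<omega>)\<^sup>2)
             {\<omega>\<in>space M. h (X \<omega>) = v} < \<alpha>\<^sup>2"
  shows "multicalibrated_partition M X Y (space N) {f\<in>F. f ` space N \<subseteq> {0..1}} (2 * \<alpha>)
           ((\<lambda>v. {x\<in>space N. h x = v}) ` (h ` space N))"
proof -
  note pm = assms(1)
  interpret prob_space M by fact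
  let ?P = "(\<lambda>v. {x\<in>space N. h x = v}) ` (h ` space N)"
  have part: "partition_on (space N) ?P"
    by (rule partition_onI) (auto simp: disjnt_def)
  have ind: "indistinguishable M X Y {f\<in>F. f ` space N \<subseteq> {0..1}} (2 * \<alpha>) S" if S: "S \<in> ?P" for S
  proof -
    obtain v where v: "v \<in> h ` space N" and Sd: "S = {x\<in>space N. h x = v}" using S by blast
    define A where "A = {\<omega>\<in>space M. h (X \<omega>) = v}"
    have XA: "X -` S \<inter> space M = A" unfolding A_def Sd using measurable_space[OF assms(2)] by auto
    have Am: "A \<in> sets M" unfolding A_def using assms(2,7) by measurable
    have Ap: "measure M A > 0" using assms(10) v unfolding A_def by blast
    show ?thesis unfolding indistinguishable_def
    proof
      fix g assume g: "g \<in> {f\<in>F. f ` space N \<subseteq> {0..1}}"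
      have gm: "g \<in> borel_measurable N" using g assms(5) by blast
      have Gm: "(\<lambda>\<omega>. g (X \<omega>)) \<in> borel_measurable M" using gm assms(2) by measurable
      have G01: "\<forall>\<omega>\<in>space M. g (X \<omega>) \<in> {0..1}" using g measurable_space[OF assms(2)] by blast
      have "\<bar>cond_expect M (\<lambda>\<omega>. g (X \<omega>) * Y \<omega>) A - cond_expect M (\<lambda>\<omega>. g (X \<omega>)) A * cond_expect M Y A\<bar> \<le> 2 * \<alpha>"
      proof (rule core[OF pm Am Ap Gm assms(3) G01 assms(4) assms(11)])
        fix \<eta>
        define c where "c = cond_expect M (\<lambda>\<omega>. g (X \<omega>)) A"
        define f where "f = (\<lambda>x. (v - \<eta> * c) + \<eta> * g x)"
        have fF: "f \<in> F" unfolding f_def using g assms(6) by blast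
        have "cond_expect M (\<lambda>\<omega>. (h (X \<omega>) - Y \<omega>)\<^sup>2 - (f (X \<omega>) - Y \<omega>)\<^sup>2) A < \<alpha>\<^sup>2"
          using assms(12) fF v unfolding A_def by blast
        moreover have "cond_expect M (\<lambda>\<omega>. (h (X \<omega>) - Y \<omega>)\<^sup>2 - (f (X \<omega>) - Y \<omega>)\<^sup>2) A
          = cond_expect M (\<lambda>\<omega>. (v - Y \<omega>)\<^sup>2 - ((v - \<eta> * c + \<eta> * g (X \<omega>)) - Y \<omega>)\<^sup>2) A"
        proof -
          have "(\<lambda>\<omega>. indicator A \<omega> * ((h (X \<omega>) - Y \<omega>)\<^sup>2 - (f (X \<omega>) - Y \<omega>)\<^sup>2))
            = (\<lambda>\<omega>. indicator A \<omega> * ((v - Y \<omega>)\<^sup>2 - ((v - \<eta> * c + \<eta> * g (X \<omega>)) - Y \<omega>)\<^sup>2))"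
            by (auto simp: fun_eq_iff indicator_def A_def f_def)
          then show ?thesis unfolding cond_expect_def by simp
        qed
        ultimately show "cond_expect M (\<lambda>\<omega>. (v - Y \<omega>)\<^sup>2 - ((v - \<eta> * cond_expect M (\<lambda>\<omega>. g (X \<omega>)) A + \<eta> * g (X \<omega>)) - Y \<omega>)\<^sup>2) A < \<alpha>\<^sup>2"
          by (simp add: c_def)
      qed
      then show "\<bar>cond_cov M X Y g S\<bar> \<le> 2 * \<alpha>" unfolding cond_cov_def XA Let_def .
    qed
  qed
  show ?thesis unfolding multicalibrated_partition_def using part ind by blast
qed

end
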